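(* Let $Q$ be an automorphic loop satisfying condition (C) (for all $a,b\in Q$: $a(ab)=(ba)a$ if and only if $ab=ba$), and let $x,y\in Q$. If $x(xy)=(yx)x$, then the subloop $\langle x,y\rangle$ generated by $x$ and $y$ is commutative.
   Context: A loop is a set with a binary operation in which all equations $ax=b$, $ya=b$ are uniquely solvable and which has a two-sided identity. For $a\in L$, $R_a:x\mapsto xa$, $L_a:x\mapsto ax$; the inner mapping group is the stabilizer of the identity in the group generated by all $R_a,L_a$. A loop is automorphic if every inner mapping is an automorphism. The subloop generated by a subset $S$ is the intersection of all subloops containing $S$. *)

theory Defs
  imports Main
begin

definition loop :: "'a set \<Rightarrow> ('a \<Rightarrow> 'a \<Rightarrow> 'a) \<Rightarrow> 'a \<Rightarrow> bool" where
  "loop Q m e \<longleftrightarrow> e \<in> Q \<and> (\<forall>a\<in>Q. \<forall>b\<in>Q. m a b \<in> Q)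
     \<and> (\<forall>a\<in>Q. m e a = a \<and> m a e = a)
     \<and> (\<forall>a\<in>Q. \<forall>b\<in>Q. \<exists>!x. x \<in> Q \<and> m a x = b)
     \<and> (\<forall>a\<in>Q. \<forall>b\<in>Q. \<exists>!y. y \<in> Q \<and> m y a = b)"

text \<open>Left and right translations as permutations of Q (identity outside Q).\<close>
definition Lmap :: "'a set \<Rightarrow> ('a \<Rightarrow> 'a \<Rightarrow> 'a) \<Rightarrow> 'a \<Rightarrow> 'a \<Rightarrow> 'a" where
  "Lmap Q m a = (\<lambda>x. if x \<in> Q then m a x else x)"

definition Rmap :: "'a set \<Rightarrow> ('a \<Rightarrow> 'a \<Rightarrow> 'a) \<Rightarrow> 'a \<Rightarrow> 'a \<Rightarrow> 'a" where
  "Rmap Q m a = (\<lambda>x. if x \<in> Q then m x a else x)"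

definition perm_inv :: "'a set \<Rightarrow> ('a \<Rightarrow> 'a) \<Rightarrow> 'a \<Rightarrow> 'a" where
  "perm_inv Q f = (\<lambda>x. if x \<in> Q then inv_into Q f x else x)"

inductive_set Mlt :: "'a set \<Rightarrow> ('a \<Rightarrow> 'a \<Rightarrow> 'a) \<Rightarrow> ('a \<Rightarrow> 'a) set"
  for Q m where
  Mlt_id: "id \<in> Mlt Q m"
| Mlt_L: "\<lbrakk>f \<in> Mlt Q m; a \<in> Q\<rbrakk> \<Longrightarrow> Lmap Q m a \<circ> f \<in> Mlt Q m"
| Mlt_R: "\<lbrakk>f \<in> Mlt Q m; a \<in> Q\<rbrakk> \<Longrightarrow> Rmap Q m a \<circ> f \<in> Mlt Q m"
| Mlt_Linv: "\<lbrakk>f \<in> Mlt Q m; a \<in> Q\<rbrakk> \<Longrightarrow> perm_inv Q (Lmap Q m a) \<circ> f \<in> Mlt Q m"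
| Mlt_Rinv: "\<lbrakk>f \<in> Mlt Q m; a \<in> Q\<rbrakk> \<Longrightarrow> perm_inv Q (Rmap Q m a) \<circ> f \<in> Mlt Q m"

definition Inn :: "'a set \<Rightarrow> ('a \<Rightarrow> 'a \<Rightarrow> 'a) \<Rightarrow> 'a \<Rightarrow> ('a \<Rightarrow> 'a) set" where
  "Inn Q m e = {f \<in> Mlt Q m. f e = e}"

definition automorphic_loop :: "'a set \<Rightarrow> ('a \<Rightarrow> 'a \<Rightarrow> 'a) \<Rightarrow> 'a \<Rightarrow> bool" where
  "automorphic_loop Q m e \<longleftrightarrow> loop Q m e \<and>
     (\<forall>f \<in> Inn Q m e. bij_betw f Q Q \<and> (\<forall>x\<in>Q. \<forall>y\<in>Q. f (m x y) = m (f x) (f y)))"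

definition subloop :: "'a set \<Rightarrow> 'a set \<Rightarrow> ('a \<Rightarrow> 'a \<Rightarrow> 'a) \<Rightarrow> bool" where
  "subloop H Q m \<longleftrightarrow> H \<subseteq> Q \<and> (\<exists>u. loop H m u)"

definition gen_subloop :: "'a set \<Rightarrow> ('a \<Rightarrow> 'a \<Rightarrow> 'a) \<Rightarrow> 'a set \<Rightarrow> 'a set" where
  "gen_subloop Q m S = \<Inter>{H. subloop H Q m \<and> S \<subseteq> H}"

end

theory Submission
  imports Defs
begin
lemma fix_loop:
  assumes L: "loop Q m e" and fQ: "\<forall>x\<in>Q. f x \<in> Q"
    and hom: "\<forall>x\<in>Q. \<forall>y\<in>Q. f (m x y) = m (f x) (f y)" and fe: "f e = e"
  shows "loop {b\<in>Q. f b = b} m e"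
proof -
  let ?F = "{b\<in>Q. f b = b}"
  have eQ: "e \<in> Q" and cl: "\<forall>a\<in>Q. \<forall>b\<in>Q. m a b \<in> Q"
    and id: "\<forall>a\<in>Q. m e a = a \<and> m a e = a"
    and ls: "\<forall>a\<in>Q. \<forall>b\<in>Q. \<exists>!x. x \<in> Q \<and> m a x = b"
    and rs: "\<forall>a\<in>Q. \<forall>b\<in>Q. \<exists>!y. y \<in> Q \<and> m y a = b"
    using L unfolding loop_def by auto
  have ls': "\<exists>!x. x \<in> ?F \<and> m a x = b" if "a \<in> ?F" "b \<in> ?F" for a b
  proof -
    have aQ: "a \<in> Q" and bQ: "b \<in> Q" and fa: "f a = a" and fb: "f b = b" using that by auto
    from ls aQ bQ have "\<exists>!x. x \<in> Q \<and> m a x = b" by blast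
    then obtain z where z: "z \<in> Q" "m a z = b"
      and u: "\<And>w. w \<in> Q \<Longrightarrow> m a w = b \<Longrightarrow> w = z" unfolding Ex1_def by blast
    have "m a (f z) = f (m a z)" using hom aQ z fa by metis
    also have "\<dots> = b" using z fb by simp
    finally have "f z = z" using u fQ z by blast
    then show ?thesis using z u by blast
  qed
  have rs': "\<exists>!x. x \<in> ?F \<and> m x a = b" if "a \<in> ?F" "b \<in> ?F" for a b
  proof -
    have aQ: "a \<in> Q" and bQ: "b \<in> Q" and fa: "f a = a" and fb: "f b = b" using that by auto
    from rs aQ bQ have "\<exists>!x. x \<in> Q \<and> m x a = b" by blast
    then obtain z where z: "z \<in> Q" "m z a = b"
      and u: "\<And>w. w \<in> Q \<Longrightarrow> m w a = b \<Longrightarrow> w = z" unfolding Ex1_def by blast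
    have "m (f z) a = f (m z a)" using hom aQ z fa by metis
    also have "\<dots> = b" using z fb by simp
    finally have "f z = z" using u fQ z by blast
    then show ?thesis using z u by blast
  qed
  have c2: "\<forall>a\<in>?F. \<forall>b\<in>?F. m a b \<in> ?F" using cl hom by auto
  have i2: "\<forall>a\<in>?F. m e a = a \<and> m a e = a" using id by auto
  show ?thesis unfolding loop_def
    apply (intro conjI)
    using eQ fe c2 i2 ls' rs' by simp_all
qed
lemma comm_subloop:
  assumes A: "automorphic_loop Q m e" and a: "a \<in> Q"
  shows "subloop {b\<in>Q. m a b = m b a} Q m"
proof -
  have L: "loop Q m e" using A unfolding automorphic_loop_def by auto
  have eQ: "e \<in> Q" and cl: "\<forall>a\<in>Q. \<forall>b\<in>Q. m a b \<in> Q"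
    and id: "\<forall>a\<in>Q. m e a = a \<and> m a e = a"
    and rs: "\<forall>a\<in>Q. \<forall>b\<in>Q. \<exists>!y. y \<in> Q \<and> m y a = b"
    using L unfolding loop_def by auto
  define R where "R = Rmap Q m a"
  define T where "T = perm_inv Q R \<circ> Lmap Q m a"
  have inj: "inj_on R Q"
  proof (rule inj_onI)
    fix u v assume uv: "u \<in> Q" "v \<in> Q" "R u = R v"
    then have "m u a = m v a" unfolding R_def Rmap_def by auto
    moreover have "m u a \<in> Q" using cl uv a by auto
    ultimately show "u = v" using rs a uv by metis
  qed
  have Tb: "T b = inv_into Q R (m a b)" if "b \<in> Q" for b
    using that cl a unfolding T_def perm_inv_def Lmap_def by auto
  have fixeq: "T b = b \<longleftrightarrow> m a b = m b a" if b: "b \<in> Q" for b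
  proof
    assume "T b = b"
    then have "inv_into Q R (m a b) = b" using Tb b by simp
    moreover have "m a b \<in> R ` Q"
    proof -
      obtain y where "y \<in> Q" "m y a = m a b" using rs a b cl by metis
      then show ?thesis unfolding R_def Rmap_def by force
    qed
    ultimately have "R b = m a b" using f_inv_into_f by metis
    then show "m a b = m b a" unfolding R_def Rmap_def using b by simp
  next
    assume "m a b = m b a"
    then have "m a b = R b" unfolding R_def Rmap_def using b by simp
    then show "T b = b" using Tb b inj by (simp add: inv_into_f_f)
  qed
  have "T \<in> Mlt Q m"
  proof -
    have "Lmap Q m a \<circ> id \<in> Mlt Q m" using a by (rule Mlt_L[OF Mlt_id])
    then have "perm_inv Q (Rmap Q m a) \<circ> (Lmap Q m a \<circ> id) \<in> Mlt Q m"
      using a by (rule Mlt_Rinv)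
    then show ?thesis unfolding T_def R_def by simp
  qed
  moreover have "T e = e" using fixeq eQ id a by auto
  ultimately have "T \<in> Inn Q m e" unfolding Inn_def by auto
  then have bij: "bij_betw T Q Q" and hom: "\<forall>x\<in>Q. \<forall>y\<in>Q. T (m x y) = m (T x) (T y)"
    using A unfolding automorphic_loop_def by auto
  have TQ: "\<forall>x\<in>Q. T x \<in> Q" using bij bij_betwE by blast
  have "loop {b\<in>Q. T b = b} m e" using fix_loop[OF L TQ hom] \<open>T e = e\<close> by simp
  moreover have "{b\<in>Q. T b = b} = {b\<in>Q. m a b = m b a}" using fixeq by auto
  ultimately show ?thesis unfolding subloop_def by auto
qed

theorem lemma3p3:
  fixes Q :: "'a set" and m :: "'a \<Rightarrow> 'a \<Rightarrow> 'a" and e x y :: 'a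
  assumes "automorphic_loop Q m e"
    and C: "\<forall>a\<in>Q. \<forall>b\<in>Q. m a (m a b) = m (m b a) a \<longleftrightarrow> m a b = m b a"
    and "x \<in> Q" and "y \<in> Q"
    and "m x (m x y) = m (m y x) x"
  shows "\<forall>a\<in>gen_subloop Q m {x, y}. \<forall>b\<in>gen_subloop Q m {x, y}. m a b = m b a"
proof -
  have xy: "m x y = m y x" using C assms by auto
  let ?G = "gen_subloop Q m {x, y}"
  have sub: "?G \<subseteq> {b\<in>Q. m a b = m b a}"
    if "a \<in> Q" "m a x = m x a" "m a y = m y a" for a
    using comm_subloop[OF assms(1) that(1)] that assms(3,4)
    unfolding gen_subloop_def by auto
  have L: "loop Q m e" using assms(1) unfolding automorphic_loop_def by auto
  have GQ: "?G \<subseteq> Q" using L assms(3,4) unfolding gen_subloop_def subloop_def by auto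
  show ?thesis
  proof (intro ballI)
    fix a b assume ab: "a \<in> ?G" "b \<in> ?G"
    have aQ: "a \<in> Q" using ab GQ by auto
    have "m x a = m a x" using sub[of x] assms(3) xy ab by auto
    moreover have "m y a = m a y" using sub[of y] assms(4) xy ab by auto
    ultimately show "m a b = m b a" using sub[of a] aQ ab by auto
  qed
qed

end
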